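(* Let $K\subseteq\mathbb{R}$ be a cubic number field having exactly one real embedding, and let $\alpha,\beta\in K$. Then there exists a strictly increasing sequence $(\psi_n)_{n\ge1}$ of positive integers such that $\lim_{n\to\infty}\psi_n\|\psi_n\alpha\|\,\|\psi_n\beta\|=0$.
   Context: For $x\in\mathbb{R}$, $\|x\|$ denotes the distance from $x$ to the nearest integer. *)

theory Defs
  imports "HOL-Analysis.Analysis" "HOL-Computational_Algebra.Computational_Algebra"
begin

definition dist_nint :: "real \<Rightarrow> real" where
  "dist_nint x = \<bar>x - of_int (round x)\<bar>"

text \<open>The field Q(theta) inside R, for theta algebraic: all rational polynomial
  expressions in theta.\<close>
definition Q_adjoin :: "real \<Rightarrow> real set" where
  "Q_adjoin \<theta> = {poly (map_poly of_rat p) \<theta> | p :: rat poly. True}"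

text \<open>K = Q(theta) is a cubic number field with exactly one real embedding:
  theta is a root of an irreducible rational cubic f having exactly one real root
  (real embeddings of K correspond to the real roots of f).\<close>
definition cubic_one_real_embedding_gen :: "rat poly \<Rightarrow> real \<Rightarrow> bool" where
  "cubic_one_real_embedding_gen f \<theta> \<longleftrightarrow>
     irreducible f \<and> degree f = 3 \<and> poly (map_poly of_rat f) \<theta> = 0 \<and>
     card {x :: real. poly (map_poly of_rat f) x = 0} = 1"

end

theory Submission
  imports Defs "HOL-Computational_Algebra.Field_as_Ring" "HOL-Computational_Algebra.Polynomial_Factorial"
begin


definition evc :: "'a::field_char_0 \<Rightarrow> int \<times> int \<times> int \<Rightarrow> 'a" where
  "evc z v = (case v of (a,b,c) \<Rightarrow> of_int a + of_int b * z + of_int c * z^2)"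

lemma flc_gen: fixes x y c \<delta> :: real assumes d: "\<delta> > 0" and h: "\<lfloor>(x + c)/\<delta>\<rfloor> = \<lfloor>(y + c)/\<delta>\<rfloor>"
  shows "\<bar>x - y\<bar> < \<delta>"
proof -
  define X where "X = (x + c)/\<delta>"
  define Y where "Y = (y + c)/\<delta>"
  have "X - 1 < of_int \<lfloor>X\<rfloor>" "of_int \<lfloor>X\<rfloor> \<le> X" "Y - 1 < of_int \<lfloor>Y\<rfloor>" "of_int \<lfloor>Y\<rfloor> \<le> Y"
    by (simp_all add: real_of_int_floor_gt_diff_one of_int_floor_le)
  moreover have "\<lfloor>X\<rfloor> = \<lfloor>Y\<rfloor>" using h unfolding X_def Y_def .
  ultimately have "\<bar>X - Y\<bar> < 1" by linarith
  moreover have "x - y = (X - Y) * \<delta>" unfolding X_def Y_def using d by (simp add: field_simps)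
  ultimately show ?thesis using d by (simp add: abs_mult)
qed

locale cub =
  fixes e1 e2 e3 :: int
begin

definition mulv :: "int \<times> int \<times> int \<Rightarrow> int \<times> int \<times> int \<Rightarrow> int \<times> int \<times> int" where
  "mulv v w = (case v of (a,b,c) \<Rightarrow> case w of (a',b',c') \<Rightarrow>
     (a*a' + (b*c'+c*b')*e3 + c*c'*e1*e3,
      a*b'+b*a' - (b*c'+c*b')*e2 + c*c'*(e3 - e1*e2),
      a*c'+b*b'+c*a' + (b*c'+c*b')*e1 + c*c'*(e1^2-e2)))"

definition Nf :: "int \<times> int \<times> int \<Rightarrow> int" where
  "Nf v = (case v of (a,b,c) \<Rightarrow> c^3*e3^2 + b*c^2*e2*e3 + b^2*c*e1*e3 + b^3*e3 + a*c^2*e2^2 - 2*a*c^2*e1*e3 - 3*a*b*c*e3 + a*b*c*e1*e2 + a*b^2*e2 - 2*a^2*c*e2 + a^2*c*e1^2 + a^2*b*e1 + a^3)"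

definition adj :: "int \<times> int \<times> int \<Rightarrow> int \<times> int \<times> int" where
  "adj v = (case v of (a,b,c) \<Rightarrow> (c^2*e2^2 - c^2*e1*e3 - b*c*e3 + b*c*e1*e2 + b^2*e2 - 2*a*c*e2 + a*c*e1^2 + a*b*e1 + a^2,
     c^2*e3 - c^2*e1*e2 - b*c*e1^2 - b^2*e1 - a*b,
     c^2*e2 + b*c*e1 + b^2 - a*c))"

definition trv :: "int \<times> int \<times> int \<Rightarrow> int" where
  "trv v = (case v of (a,b,c) \<Rightarrow> 3*a + b*e1 + c*(e1^2 - 2*e2))"

lemma evc_mulv:
  fixes z :: "'a::field_char_0"
  assumes h: "z^3 = of_int e1 * z^2 - of_int e2 * z + of_int e3"
  shows "evc z (mulv (a,b,c) (a',b',c')) = evc z (a,b,c) * evc z (a',b',c')"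
proof -
  have z4: "z^4 = (of_int e1^2 - of_int e2) * z^2 + (of_int e3 - of_int e1 * of_int e2) * z + of_int e1 * of_int e3"
    using h by algebra
  have "evc z (a,b,c) * evc z (a',b',c') = of_int (a*a') + of_int (a*b'+b*a') * z + of_int (a*c'+b*b'+c*a') * z^2
     + of_int (b*c'+c*b') * z^3 + of_int (c*c') * z^4"
    by (simp add: evc_def) algebra
  also have "... = evc z (mulv (a,b,c) (a',b',c'))"
    unfolding z4 h by (simp add: evc_def mulv_def) algebra
  finally show ?thesis by simp
qed

lemma mulv_adj: "mulv (a,b,c) (adj (a,b,c)) = (Nf (a,b,c), 0, 0)"
  by (simp add: mulv_def adj_def Nf_def) algebra

lemma norm_prod:
  fixes x y z :: "'a::field_char_0"
  assumes "x + y + z = of_int e1" "x*y + x*z + y*z = of_int e2" "x*y*z = of_int e3"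
  shows "evc x (a,b,c) * evc y (a,b,c) * evc z (a,b,c) = of_int (Nf (a,b,c))"
  unfolding Nf_def evc_def by (simp flip: assms) algebra


definition vneg :: "int \<times> int \<times> int \<Rightarrow> int \<times> int \<times> int" where
  "vneg v = (case v of (a,b,c) \<Rightarrow> (-a,-b,-c))"

lemma evc_vneg: "evc z (vneg v) = - evc z v"
  by (cases v) (simp add: evc_def vneg_def algebra_simps)

lemma vieta_root:
  fixes x y z :: "'a::field_char_0"
  assumes "x + y + z = of_int e1" "x*y + x*z + y*z = of_int e2" "x*y*z = of_int e3"
  shows "x^3 = of_int e1 * x^2 - of_int e2 * x + of_int e3"
  unfolding assms(1,2,3)[symmetric] by algebra

lemma evc_mulv':
  fixes z :: "'a::field_char_0"
  assumes h: "z^3 = of_int e1 * z^2 - of_int e2 * z + of_int e3"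
  shows "evc z (mulv v w) = evc z v * evc z w"
  using evc_mulv[OF h] by (cases v; cases w) auto

lemma evc_adj:
  fixes z :: "'a::field_char_0"
  assumes h: "z^3 = of_int e1 * z^2 - of_int e2 * z + of_int e3"
  shows "evc z v * evc z (adj v) = of_int (Nf v)"
proof -
  obtain a b c where v: "v = (a,b,c)" by (cases v)
  have "evc z v * evc z (adj v) = evc z (mulv v (adj v))" using evc_mulv'[OF h] by simp
  also have "... = of_int (Nf v)" unfolding v mulv_adj by (simp add: evc_def)
  finally show ?thesis .
qed

lemma norm_prod':
  fixes x y z :: "'a::field_char_0"
  assumes "x + y + z = of_int e1" "x*y + x*z + y*z = of_int e2" "x*y*z = of_int e3"
  shows "evc x v * evc y v * evc z v = of_int (Nf v)"
  using norm_prod[OF assms] by (cases v) auto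

lemma trace_sum:
  fixes x y z :: "'a::field_char_0"
  assumes "x + y + z = of_int e1" "x*y + x*z + y*z = of_int e2"
  shows "evc x v + evc y v + evc z v = of_int (trv v)"
proof -
  obtain a b c where v: "v = (a,b,c)" by (cases v)
  have sq: "x^2 + y^2 + z^2 = of_int e1 ^ 2 - 2 * of_int e2"
    unfolding assms[symmetric] by algebra
  have "evc x v + evc y v + evc z v = 3 * of_int a + of_int b * (x+y+z) + of_int c * (x^2+y^2+z^2)"
    unfolding v evc_def by (simp add: algebra_simps)
  also have "... = of_int (trv v)" unfolding sq assms v trv_def by simp
  finally show ?thesis .
qed

fun vpow :: "int \<times> int \<times> int \<Rightarrow> nat \<Rightarrow> int \<times> int \<times> int" where
  "vpow e 0 = (1,0,0)"
| "vpow e (Suc n) = mulv e (vpow e n)"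

lemma evc_vpow:
  fixes z :: "'a::field_char_0"
  assumes h: "z^3 = of_int e1 * z^2 - of_int e2 * z + of_int e3"
  shows "evc z (vpow e n) = evc z e ^ n"
  by (induction n) (simp add: evc_def, simp add: evc_mulv'[OF h])

lemma mulv_lin:
  "mulv (a + L*x, b + L*y, c + L*z) w =
     (fst (mulv (a,b,c) w) + L * fst (mulv (x,y,z) w),
      fst (snd (mulv (a,b,c) w)) + L * fst (snd (mulv (x,y,z) w)),
      snd (snd (mulv (a,b,c) w)) + L * snd (snd (mulv (x,y,z) w)))"
  by (cases w) (simp add: mulv_def algebra_simps)

end

locale cubic = cub +
  fixes \<eta> :: real and \<sigma> :: complex
  assumes v1: "complex_of_real \<eta> + \<sigma> + cnj \<sigma> = of_int e1"
    and v2: "complex_of_real \<eta> * \<sigma> + complex_of_real \<eta> * cnj \<sigma> + \<sigma> * cnj \<sigma> = of_int e2"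
    and v3: "complex_of_real \<eta> * \<sigma> * cnj \<sigma> = of_int e3"
    and nonreal: "Im \<sigma> \<noteq> 0"
    and indR: "\<And>a b c. evc \<eta> (a,b,c) = 0 \<Longrightarrow> a = 0 \<and> b = 0 \<and> c = 0"
    and indC: "\<And>a b c. evc \<sigma> (a,b,c) = 0 \<Longrightarrow> a = 0 \<and> b = 0 \<and> c = 0"
begin

lemma rootC: "\<sigma>^3 = of_int e1 * \<sigma>^2 - of_int e2 * \<sigma> + of_int e3"
proof (rule vieta_root[of \<sigma> "complex_of_real \<eta>" "cnj \<sigma>"])
  show "\<sigma> + complex_of_real \<eta> + cnj \<sigma> = complex_of_int e1" using v1 by (simp add: algebra_simps)
  show "\<sigma> * complex_of_real \<eta> + \<sigma> * cnj \<sigma> + complex_of_real \<eta> * cnj \<sigma> = complex_of_int e2"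
    using v2 by (simp add: algebra_simps)
  show "\<sigma> * complex_of_real \<eta> * cnj \<sigma> = complex_of_int e3" using v3 by (simp add: algebra_simps)
qed

lemma rootR: "\<eta>^3 = of_int e1 * \<eta>^2 - of_int e2 * \<eta> + of_int e3"
proof -
  have "(complex_of_real \<eta>)^3 = of_int e1 * (complex_of_real \<eta>)^2 - of_int e2 * complex_of_real \<eta> + of_int e3"
    by (rule vieta_root[OF v1 v2 v3])
  hence "complex_of_real (\<eta>^3) = complex_of_real (of_int e1 * \<eta>^2 - of_int e2 * \<eta> + of_int e3)"
    by simp
  thus ?thesis using of_real_eq_iff by blast
qed

lemma evc_of_real: "evc (complex_of_real x) v = complex_of_real (evc x v)"
  by (cases v) (simp add: evc_def)

lemma evc_cnj: "evc (cnj z) v = cnj (evc z v)"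
  by (cases v) (simp add: evc_def)

lemma normR: "evc \<eta> v * (cmod (evc \<sigma> v))^2 = of_int (Nf v)"
proof -
  have "evc (complex_of_real \<eta>) v * evc \<sigma> v * evc (cnj \<sigma>) v = of_int (Nf v)"
    by (rule norm_prod') (use v1 v2 v3 in simp_all)
  hence "complex_of_real (evc \<eta> v) * (evc \<sigma> v * cnj (evc \<sigma> v)) = of_int (Nf v)"
    by (simp add: evc_of_real evc_cnj mult.assoc)
  hence "complex_of_real (evc \<eta> v) * complex_of_real ((cmod (evc \<sigma> v))^2) = of_int (Nf v)"
    by (simp only: complex_norm_square)
  hence "complex_of_real (evc \<eta> v * (cmod (evc \<sigma> v))^2) = complex_of_real (of_int (Nf v))"
    by simp
  thus ?thesis using of_real_eq_iff by blast
qed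

lemma traceR: "evc \<eta> v + 2 * Re (evc \<sigma> v) = of_int (trv v)"
proof -
  have "evc (complex_of_real \<eta>) v + evc \<sigma> v + evc (cnj \<sigma>) v = of_int (trv v)"
    by (rule trace_sum) (use v1 v2 in simp_all)
  hence "Re (evc (complex_of_real \<eta>) v + evc \<sigma> v + evc (cnj \<sigma>) v) = of_int (trv v)"
    by simp
  thus ?thesis by (simp add: evc_of_real evc_cnj)
qed

lemma mulR: "evc \<eta> (mulv v w) = evc \<eta> v * evc \<eta> w"
  by (rule evc_mulv'[OF rootR])
lemma mulC: "evc \<sigma> (mulv v w) = evc \<sigma> v * evc \<sigma> w"
  by (rule evc_mulv'[OF rootC])

lemma evcR_nz: "v \<noteq> (0,0,0) \<Longrightarrow> evc \<eta> v \<noteq> 0"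
  using indR by (cases v) auto
lemma evcC_nz: "v \<noteq> (0,0,0) \<Longrightarrow> evc \<sigma> v \<noteq> 0"
  using indC by (cases v) auto


lemma small_elt:
  fixes s :: nat assumes s1: "s \<ge> 1"
  shows "\<exists>w. w \<noteq> (0,0,0) \<and> cmod (evc \<sigma> w) < 4*(1 + cmod \<sigma> + cmod \<sigma> ^ 2)/s \<and>
             \<bar>evc \<eta> w\<bar> \<le> s^2 * (1 + \<bar>\<eta>\<bar> + \<bar>\<eta>\<bar>^2)"
proof -
  define S where "S = 1 + cmod \<sigma> + cmod \<sigma> ^ 2"
  have S1: "S \<ge> 1" unfolding S_def by simp
  define H :: int where "H = int (s^2)"
  define K :: int where "K = int (s^3)"
  have H1: "H \<ge> 1" and K1: "K \<ge> 1" using s1 by (simp_all add: H_def K_def)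
  define A where "A = {0..H} \<times> {0..H} \<times> {0..H}"
  define \<delta> where "\<delta> = 2 * H * S / K"
  have \<delta>0: "\<delta> > 0" unfolding \<delta>_def using S1 H1 K1 by simp
  have bnd: "cmod (evc \<sigma> v) \<le> H * S" if vA: "v \<in> A" for v
  proof -
    obtain a b c where v: "v = (a,b,c)" and ab: "0 \<le> a" "a \<le> H" "0 \<le> b" "b \<le> H" "0 \<le> c" "c \<le> H"
      using vA unfolding A_def by (cases v) auto
    have "cmod (evc \<sigma> v) \<le> cmod (of_int a) + cmod (of_int b * \<sigma>) + cmod (of_int c * \<sigma>^2)"
      unfolding v evc_def by (simp add: norm_triangle_le norm_triangle_ineq4 order_trans[OF norm_triangle_ineq] add_mono)
    also have "... = \<bar>a\<bar> + \<bar>b\<bar> * cmod \<sigma> + \<bar>c\<bar> * cmod \<sigma> ^ 2"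
      by (simp add: norm_mult norm_power)
    also have "... \<le> H + H * cmod \<sigma> + H * cmod \<sigma> ^ 2"
      using ab by (intro add_mono mult_right_mono) auto
    also have "... = H * S" unfolding S_def by (simp add: algebra_simps)
    finally show ?thesis .
  qed
  define idx where "idx v = (\<lfloor>(Re (evc \<sigma> v) + H*S)/\<delta>\<rfloor>, \<lfloor>(Im (evc \<sigma> v) + H*S)/\<delta>\<rfloor>)" for v
  have KHd: "2 * H * S / \<delta> = K" unfolding \<delta>_def using S1 H1 K1 by (simp add: field_simps)
  have fl: "\<lfloor>(x + H*S)/\<delta>\<rfloor> \<in> {0..K}" if "\<bar>x\<bar> \<le> H * S" for x
  proof -
    have "0 \<le> (x + H*S)/\<delta>" using that \<delta>0 by simp
    moreover have "x + H*S \<le> 2 * H * S" using that by linarith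
    hence "(x + H*S)/\<delta> \<le> 2 * H * S / \<delta>" using \<delta>0 by (intro divide_right_mono) auto
    ultimately show ?thesis using KHd by (auto simp: floor_le_iff)
  qed
  have img: "idx ` A \<subseteq> {0..K} \<times> {0..K}"
  proof
    fix p assume "p \<in> idx ` A"
    then obtain v where v: "v \<in> A" "p = idx v" by auto
    have "\<bar>Re (evc \<sigma> v)\<bar> \<le> H * S" "\<bar>Im (evc \<sigma> v)\<bar> \<le> H * S"
      using bnd[OF v(1)] abs_Re_le_cmod abs_Im_le_cmod order_trans by blast+
    thus "p \<in> {0..K} \<times> {0..K}" using fl v(2) unfolding idx_def by auto
  qed
  have cardA: "card A = nat (H+1)^3" unfolding A_def using H1 by (simp add: card_cartesian_product power3_eq_cube)
  have cardB: "card ({0..K} \<times> {0..K}) = nat (K+1)^2" using K1 by (simp add: card_cartesian_product power2_eq_square)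
  have ineq: "(s^3 + 1)^2 < (s^2+1)^(3::nat)"
  proof -
    have ex1: "(s^3 + 1)^2 = s^6 + 2 * s^3 + 1" by algebra
    have ex2: "(s^2 + 1)^3 = s^6 + 3 * s^4 + 3 * s^2 + 1" by algebra
    have "s^3 \<le> s^4" using s1 by (simp add: power_increasing)
    moreover have "0 < s^2" using s1 by simp
    ultimately show ?thesis unfolding ex1 ex2 by linarith
  qed
  have "nat (K+1)^2 < nat (H+1)^3"
  proof -
    have "nat (K+1) = s^3 + 1" "nat (H+1) = s^2 + 1" unfolding K_def H_def by (simp_all add: nat_add_distrib flip: of_nat_power)
    thus ?thesis using ineq by simp
  qed
  hence "card (idx ` A) < card A"
    using card_mono[OF _ img] cardA cardB by (simp add: finite_cartesian_product)
  hence "\<not> inj_on idx A" by (rule pigeonhole)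
  then obtain v1 v2 where vA: "v1 \<in> A" "v2 \<in> A" and vne: "v1 \<noteq> v2" and ideq: "idx v1 = idx v2"
    by (meson inj_onI)
  obtain a1 b1 c1 where v1: "v1 = (a1,b1,c1)" by (cases v1)
  obtain a2 b2 c2 where v2: "v2 = (a2,b2,c2)" by (cases v2)
  have flc: "\<bar>x - y\<bar> < \<delta>" if "\<lfloor>(x + H*S)/\<delta>\<rfloor> = \<lfloor>(y + H*S)/\<delta>\<rfloor>" for x y
    by (rule flc_gen[OF \<delta>0 that])
  define w where "w = (a1 - a2, b1 - b2, c1 - c2)"
  have wne: "w \<noteq> (0,0,0)" using vne unfolding w_def v1 v2 by auto
  have ew: "evc \<sigma> w = evc \<sigma> v1 - evc \<sigma> v2" unfolding w_def v1 v2 evc_def by (simp add: algebra_simps)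
  have "\<bar>Re (evc \<sigma> v1) - Re (evc \<sigma> v2)\<bar> < \<delta>" "\<bar>Im (evc \<sigma> v1) - Im (evc \<sigma> v2)\<bar> < \<delta>"
  proof -
    have r1: "\<lfloor>(Re (evc \<sigma> v1) + H*S)/\<delta>\<rfloor> = \<lfloor>(Re (evc \<sigma> v2) + H*S)/\<delta>\<rfloor>"
      using ideq unfolding idx_def by simp
    have r2: "\<lfloor>(Im (evc \<sigma> v1) + H*S)/\<delta>\<rfloor> = \<lfloor>(Im (evc \<sigma> v2) + H*S)/\<delta>\<rfloor>"
      using ideq unfolding idx_def by simp
    show "\<bar>Re (evc \<sigma> v1) - Re (evc \<sigma> v2)\<bar> < \<delta>" by (rule flc[OF r1])
    show "\<bar>Im (evc \<sigma> v1) - Im (evc \<sigma> v2)\<bar> < \<delta>" by (rule flc[OF r2])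
  qed
  hence "cmod (evc \<sigma> w) < 2 * \<delta>" unfolding ew using cmod_le[of "evc \<sigma> v1 - evc \<sigma> v2"] by simp
  also have "2 * \<delta> = 4 * S / s"
  proof -
    have "2 * \<delta> = 4 * S * (real s * real s) / (real s * (real s * real s))"
      unfolding \<delta>_def H_def K_def by (simp add: power2_eq_square power3_eq_cube)
    also have "... = 4 * S / s" using s1 by (simp add: divide_simps)
    finally show ?thesis .
  qed
  finally have c1: "cmod (evc \<sigma> w) < 4 * S / s" .
  have ab: "\<bar>a1 - a2\<bar> \<le> H" "\<bar>b1 - b2\<bar> \<le> H" "\<bar>c1 - c2\<bar> \<le> H" using vA unfolding A_def v1 v2 by auto
  have "\<bar>evc \<eta> w\<bar> \<le> \<bar>of_int (a1-a2)\<bar> + \<bar>of_int (b1-b2) * \<eta>\<bar> + \<bar>of_int (c1-c2) * \<eta>^2\<bar>"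
    unfolding w_def evc_def by (simp del: of_int_diff)
  also have "... = \<bar>a1-a2\<bar> + \<bar>b1-b2\<bar> * \<bar>\<eta>\<bar> + \<bar>c1-c2\<bar> * \<bar>\<eta>\<bar>^2"
    by (simp add: abs_mult power_abs)
  also have "... \<le> H + H * \<bar>\<eta>\<bar> + H * \<bar>\<eta>\<bar>^2"
    using ab by (intro add_mono mult_right_mono) auto
  also have "... = s^2 * (1 + \<bar>\<eta>\<bar> + \<bar>\<eta>\<bar>^2)" unfolding H_def by (simp add: algebra_simps)
  finally show ?thesis using wne c1 unfolding S_def by blast
qed


end


context cubic begin
lemma evc_zero [simp]: "evc z (0,0,0) = 0"
  by (simp add: evc_def)

lemma evc_diff: "evc z (a1 - a2, b1 - b2, c1 - c2) = evc z (a1,b1,c1) - evc z (a2,b2,c2)"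
  by (simp add: evc_def algebra_simps)

lemma Nf_pos: assumes "evc \<eta> w > 0" shows "Nf w > 0"
proof -
  have "w \<noteq> (0,0,0)" using assms by auto
  hence "evc \<sigma> w \<noteq> 0" by (rule evcC_nz)
  hence "(cmod (evc \<sigma> w))^2 > 0" by simp
  hence "evc \<eta> w * (cmod (evc \<sigma> w))^2 > 0" using assms by simp
  thus ?thesis unfolding normR by simp
qed

definition C0 :: real where
  "C0 = 16 * (1 + \<bar>\<eta>\<bar> + \<bar>\<eta>\<bar>^2) * (1 + cmod \<sigma> + cmod \<sigma> ^ 2)^2"

definition Sset :: "(int \<times> int \<times> int) set" where
  "Sset = {w. evc \<eta> w > 0 \<and> Nf w \<le> \<lceil>C0\<rceil>}"

lemma small_pos:
  fixes s :: nat assumes s1: "s \<ge> 1"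
  shows "\<exists>w\<in>Sset. cmod (evc \<sigma> w) < 4*(1 + cmod \<sigma> + cmod \<sigma> ^ 2)/s"
proof -
  define S where "S = 1 + cmod \<sigma> + cmod \<sigma> ^ 2"
  define T where "T = 1 + \<bar>\<eta>\<bar> + \<bar>\<eta>\<bar>^2"
  have S0: "S > 0" and T0: "T > 0" unfolding S_def T_def by (simp_all add: add_pos_nonneg)
  obtain w where wne: "w \<noteq> (0,0,0)" and c1: "cmod (evc \<sigma> w) < 4*S/s"
    and c2: "\<bar>evc \<eta> w\<bar> \<le> s^2 * T"
    using small_elt[OF s1] unfolding S_def T_def by blast
  have Ene: "evc \<eta> w \<noteq> 0" using evcR_nz[OF wne] .
  define w' where "w' = (if evc \<eta> w > 0 then w else vneg w)"
  have E': "evc \<eta> w' = \<bar>evc \<eta> w\<bar>" using Ene unfolding w'_def by (auto simp: evc_vneg)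
  have C': "cmod (evc \<sigma> w') = cmod (evc \<sigma> w)" unfolding w'_def by (auto simp: evc_vneg)
  have pos: "evc \<eta> w' > 0" using E' Ene by simp
  have "real_of_int (Nf w') = \<bar>evc \<eta> w\<bar> * (cmod (evc \<sigma> w))^2"
    using normR[of w'] E' C' by simp
  also have "... \<le> (s^2 * T) * (4*S/s)^2"
    using c1 c2 by (intro mult_mono power_mono) auto
  also have "... = C0" unfolding C0_def S_def T_def using s1
    by (simp add: field_simps power2_eq_square)
  finally have "Nf w' \<le> \<lceil>C0\<rceil>" by linarith
  hence "w' \<in> Sset" using pos unfolding Sset_def by simp
  moreover have "cmod (evc \<sigma> w') < 4*(1 + cmod \<sigma> + cmod \<sigma> ^ 2)/s" using c1 C' unfolding S_def by simp
  ultimately show ?thesis by blast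
qed

lemma Sset_infinite: "infinite Sset"
proof
  assume fin: "finite Sset"
  define S where "S = 1 + cmod \<sigma> + cmod \<sigma> ^ 2"
  have S0: "S > 0" unfolding S_def by (simp add: add_pos_nonneg)
  have ne: "Sset \<noteq> {}" using small_pos[of 1] by auto
  define m where "m = Min ((\<lambda>w. cmod (evc \<sigma> w)) ` Sset)"
  have mpos: "m > 0"
  proof -
    have "\<forall>x\<in>(\<lambda>w. cmod (evc \<sigma> w)) ` Sset. x > 0"
    proof
      fix x assume "x \<in> (\<lambda>w. cmod (evc \<sigma> w)) ` Sset"
      then obtain w where w: "w \<in> Sset" "x = cmod (evc \<sigma> w)" by auto
      have "w \<noteq> (0,0,0)" using w unfolding Sset_def by auto
      thus "x > 0" using evcC_nz w by simp
    qed
    thus ?thesis unfolding m_def using fin ne by simp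
  qed
  obtain s :: nat where s: "s > 4 * S / m" using reals_Archimedean2 by blast
  have s1: "s \<ge> 1"
  proof -
    have "4 * S / m > 0" using S0 mpos by simp
    thus ?thesis using s by simp
  qed
  obtain w where w: "w \<in> Sset" "cmod (evc \<sigma> w) < 4*S/s" using small_pos[OF s1] unfolding S_def by blast
  have "4 * S / s < m"
    using s mpos s1 S0 by (simp add: field_simps)
  moreover have "m \<le> cmod (evc \<sigma> w)" unfolding m_def using fin w(1) by simp
  ultimately show False using w(2) by simp
qed

lemma quot_lemma:
  fixes z :: "'a::field_char_0"
  assumes h: "z^3 = of_int e1 * z^2 - of_int e2 * z + of_int e3"
    and N: "Nf w2 = Nn" "Nn \<noteq> 0" and m: "mulv w1 (adj w2) = (Nn*p, Nn*q, Nn*r)"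
  shows "evc z (p,q,r) * evc z w2 = evc z w1"
proof -
  have A: "evc z w2 * evc z (adj w2) = of_int Nn" using evc_adj[OF h] N by simp
  have B: "evc z w1 * evc z (adj w2) = of_int Nn * evc z (p,q,r)"
    using evc_mulv'[OF h, of w1 "adj w2"] m by (simp add: evc_def algebra_simps)
  have "of_int Nn * (evc z (p,q,r) * evc z w2) = of_int Nn * evc z w1"
  proof -
    have "of_int Nn * (evc z (p,q,r) * evc z w2) = evc z w2 * (of_int Nn * evc z (p,q,r))" by (simp add: algebra_simps)
    also have "... = evc z w2 * (evc z w1 * evc z (adj w2))" using B by simp
    also have "... = evc z w1 * (evc z w2 * evc z (adj w2))" by (simp add: algebra_simps)
    also have "... = of_int Nn * evc z w1" using A by simp
    finally show ?thesis .
  qed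
  thus ?thesis using N(2) by simp
qed

lemma unit_from_pair:
  assumes w1: "w1 \<in> Sset" and w2: "w2 \<in> Sset" and L: "L > 0" "\<And>n::int. 1 \<le> n \<Longrightarrow> n \<le> \<lceil>C0\<rceil> \<Longrightarrow> n dvd L"
    and NN: "Nf w1 = Nf w2"
    and md: "fst w1 mod L = fst w2 mod L" "fst (snd w1) mod L = fst (snd w2) mod L"
            "snd (snd w1) mod L = snd (snd w2) mod L"
    and gt: "evc \<eta> w1 > evc \<eta> w2"
  shows "\<exists>e. evc \<eta> e > 1 \<and> evc \<eta> e * (cmod (evc \<sigma> e))^2 = 1"
proof -
  obtain a1 b1 c1 where W1: "w1 = (a1,b1,c1)" by (cases w1)
  obtain a2 b2 c2 where W2: "w2 = (a2,b2,c2)" by (cases w2)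
  define Nn where "Nn = Nf w2"
  have pos2: "evc \<eta> w2 > 0" using w2 unfolding Sset_def by simp
  have Npos: "Nn > 0" unfolding Nn_def using Nf_pos[OF pos2] .
  have Nle: "Nn \<le> \<lceil>C0\<rceil>" using w2 unfolding Sset_def Nn_def by simp
  have NdL: "Nn dvd L" using L(2)[of Nn] Npos Nle by simp
  have "L dvd a1 - a2" using md(1) unfolding W1 W2 by (simp add: mod_eq_dvd_iff)
  then obtain x where "a1 - a2 = L * x" by (auto elim: dvdE)
  hence x: "a1 = a2 + L * x" by simp
  have "L dvd b1 - b2" using md(2) unfolding W1 W2 by (simp add: mod_eq_dvd_iff)
  then obtain y where "b1 - b2 = L * y" by (auto elim: dvdE)
  hence y: "b1 = b2 + L * y" by simp
  have "L dvd c1 - c2" using md(3) unfolding W1 W2 by (simp add: mod_eq_dvd_iff)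
  then obtain z where "c1 - c2 = L * z" by (auto elim: dvdE)
  hence z: "c1 = c2 + L * z" by simp
  define P where "P = fst (mulv (x,y,z) (adj w2))"
  define Q where "Q = fst (snd (mulv (x,y,z) (adj w2)))"
  define R where "R = snd (snd (mulv (x,y,z) (adj w2)))"
  have ma: "mulv w2 (adj w2) = (Nn, 0, 0)" unfolding W2 Nn_def by (rule mulv_adj)
  have "mulv w1 (adj w2) = mulv (a2 + L*x, b2 + L*y, c2 + L*z) (adj w2)" using W1 x y z by simp
  also have "... = (fst (mulv w2 (adj w2)) + L * P, fst (snd (mulv w2 (adj w2))) + L * Q,
                    snd (snd (mulv w2 (adj w2))) + L * R)"
    unfolding mulv_lin P_def Q_def R_def W2 by simp
  finally have mw: "mulv w1 (adj w2) = (Nn + L * P, L * Q, L * R)" unfolding ma by simp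
  obtain k where k: "L = Nn * k" using NdL by (auto elim: dvdE)
  define e where "e = (1 + k * P, k * Q, k * R)"
  have mw': "mulv w1 (adj w2) = (Nn * (1 + k * P), Nn * (k * Q), Nn * (k * R))"
    unfolding mw k by (simp add: algebra_simps)
  have qR: "evc \<eta> e * evc \<eta> w2 = evc \<eta> w1"
    unfolding e_def by (rule quot_lemma[OF rootR _ _ mw']) (use Npos Nn_def in auto)
  have qC: "evc \<sigma> e * evc \<sigma> w2 = evc \<sigma> w1"
    unfolding e_def by (rule quot_lemma[OF rootC _ _ mw']) (use Npos Nn_def in auto)
  have "evc \<eta> e > 1"
  proof (rule ccontr)
    assume "\<not> evc \<eta> e > 1"
    hence "evc \<eta> e * evc \<eta> w2 \<le> 1 * evc \<eta> w2" using pos2 by (intro mult_right_mono) auto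
    thus False using qR gt by simp
  qed
  moreover have "evc \<eta> e * (cmod (evc \<sigma> e))^2 = 1"
  proof -
    have "(evc \<eta> e * (cmod (evc \<sigma> e))^2) * (evc \<eta> w2 * (cmod (evc \<sigma> w2))^2)
        = (evc \<eta> e * evc \<eta> w2) * (cmod (evc \<sigma> e * evc \<sigma> w2))^2"
      by (simp add: norm_mult power_mult_distrib)
    also have "... = evc \<eta> w1 * (cmod (evc \<sigma> w1))^2" using qR qC by simp
    finally have "(evc \<eta> e * (cmod (evc \<sigma> e))^2) * of_int Nn = of_int Nn"
      unfolding normR Nn_def using NN by simp
    thus ?thesis using Npos by simp
  qed
  ultimately show ?thesis by blast
qed


lemma unit_exists: "\<exists>e. evc \<eta> e > 1 \<and> evc \<eta> e * (cmod (evc \<sigma> e))^2 = 1"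
proof -
  define Cn where "Cn = \<lceil>C0\<rceil>"
  define L :: int where "L = fact (nat Cn)"
  have L0: "L > 0" unfolding L_def by simp
  have Ldvd: "n dvd L" if "1 \<le> n" "n \<le> Cn" for n :: int
  proof -
    have "nat n dvd fact (nat Cn)" using that by (intro dvd_fact) auto
    hence "int (nat n) dvd int (fact (nat Cn))" by (simp only: int_dvd_int_iff)
    thus ?thesis using that unfolding L_def by (simp add: of_nat_fact)
  qed
  define cls where "cls w = (Nf w, fst w mod L, fst (snd w) mod L, snd (snd w) mod L)" for w
  have "cls ` Sset \<subseteq> {1..Cn} \<times> {0..<L} \<times> {0..<L} \<times> {0..<L}"
  proof
    fix p assume "p \<in> cls ` Sset"
    then obtain w where w: "w \<in> Sset" "p = cls w" by auto
    have "Nf w > 0" using w(1) Nf_pos unfolding Sset_def by simp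
    moreover have "Nf w \<le> Cn" using w(1) unfolding Sset_def Cn_def by simp
    ultimately show "p \<in> {1..Cn} \<times> {0..<L} \<times> {0..<L} \<times> {0..<L}"
      unfolding w(2) cls_def using L0 by simp
  qed
  hence fin: "finite (cls ` Sset)" by (rule finite_subset) simp
  obtain w0 where "w0 \<in> Sset" and inf: "infinite {w\<in>Sset. cls w = cls w0}"
    using pigeonhole_infinite[OF Sset_infinite fin] by blast
  define F where "F = {w\<in>Sset. cls w = cls w0}"
  obtain w1 where w1: "w1 \<in> F" using inf unfolding F_def by (metis ex_in_conv finite.emptyI)
  have "infinite (F - {w1})" using inf unfolding F_def by simp
  then obtain w2 where w2: "w2 \<in> F - {w1}" by (metis ex_in_conv finite.emptyI)
  have S1: "w1 \<in> Sset" and S2: "w2 \<in> Sset" and ne: "w1 \<noteq> w2" and cl: "cls w1 = cls w2"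
    using w1 w2 unfolding F_def by auto
  have Eneq: "evc \<eta> w1 \<noteq> evc \<eta> w2"
  proof
    assume eq: "evc \<eta> w1 = evc \<eta> w2"
    obtain a1 b1 c1 where W1: "w1 = (a1,b1,c1)" by (cases w1)
    obtain a2 b2 c2 where W2: "w2 = (a2,b2,c2)" by (cases w2)
    have "evc \<eta> (a1 - a2, b1 - b2, c1 - c2) = 0" using eq unfolding evc_diff W1 W2 by simp
    hence "a1 - a2 = 0 \<and> b1 - b2 = 0 \<and> c1 - c2 = 0" by (rule indR)
    thus False using ne W1 W2 by simp
  qed
  have Ld: "\<And>n::int. 1 \<le> n \<Longrightarrow> n \<le> \<lceil>C0\<rceil> \<Longrightarrow> n dvd L" using Ldvd unfolding Cn_def by blast
  have c: "Nf w1 = Nf w2" "fst w1 mod L = fst w2 mod L" "fst (snd w1) mod L = fst (snd w2) mod L"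
            "snd (snd w1) mod L = snd (snd w2) mod L" using cl unfolding cls_def by simp_all
  show ?thesis
  proof (cases "evc \<eta> w1 > evc \<eta> w2")
    case True
    show ?thesis by (rule unit_from_pair[OF S1 S2 L0 Ld c True])
  next
    case False
    hence "evc \<eta> w2 > evc \<eta> w1" using Eneq by simp
    show ?thesis
      by (rule unit_from_pair[OF S2 S1 L0 Ld]) (use c \<open>evc \<eta> w2 > evc \<eta> w1\<close> in simp_all)
  qed
qed

end



lemma dens_cis:
  fixes \<phi> \<delta> :: real and W :: complex and N0 :: nat
  assumes irr: "\<phi> / (2*pi) \<notin> \<rat>" and d: "\<delta> > 0"
  shows "\<exists>n \<ge> N0. \<bar>Re (cis (real n * \<phi>) * W)\<bar> < \<delta>"
proof (cases "W = 0")
  case True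
  thus ?thesis using d by auto
next
  case False
  define r where "r = cmod W"
  define \<gamma> where "\<gamma> = Arg W"
  have r0: "r > 0" using False unfolding r_def by simp
  have W: "W = rcis r \<gamma>" unfolding r_def \<gamma>_def by (simp add: rcis_cmod_Arg)
  define \<theta> where "\<theta> = \<phi> / (2*pi)"
  define \<alpha> where "\<alpha> = (pi/2 - \<gamma>)/(2*pi) - real N0 * \<theta>"
  have "\<delta> / (2*pi*r) > 0" using d r0 by simp
  then obtain h k where k0: "k > 0" and hk: "\<bar>of_int k * \<theta> - of_int h - \<alpha>\<bar> < \<delta> / (2*pi*r)"
    using sequence_of_fractional_parts_is_dense[OF irr[folded \<theta>_def]] by metis
  define n where "n = N0 + nat k"
  define dd where "dd = of_int k * \<theta> - of_int h - \<alpha>"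
  have "real n * \<phi> + \<gamma> = 2*pi*(real N0 * \<theta> + of_int k * \<theta>) + \<gamma>"
    unfolding n_def \<theta>_def using k0 by (simp add: field_simps)
  also have "... = pi/2 + 2*pi*dd + (2*pi) * of_int h"
    unfolding dd_def \<alpha>_def by (simp add: field_simps)
  finally have ang: "real n * \<phi> + \<gamma> = pi/2 + 2*pi*dd + (2*pi) * of_int h" .
  have "cos (real n * \<phi> + \<gamma>) = cos (pi/2 + 2*pi*dd)"
    unfolding ang by (simp add: cos_add sin_add)
  also have "... = - sin (2*pi*dd)" by (simp add: cos_add)
  finally have cs: "\<bar>cos (real n * \<phi> + \<gamma>)\<bar> \<le> \<bar>2*pi*dd\<bar>" using abs_sin_x_le_abs_x by simp
  have "\<bar>2*pi*dd\<bar> < \<delta> / r"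
  proof -
    have "\<bar>2*pi*dd\<bar> = 2*pi*\<bar>dd\<bar>" by (simp add: abs_mult)
    also have "... < 2*pi*(\<delta> / (2*pi*r))" using hk unfolding dd_def by (intro mult_strict_left_mono) auto
    also have "... = \<delta> / r" by simp
    finally show ?thesis .
  qed
  hence "\<bar>cos (real n * \<phi> + \<gamma>)\<bar> < \<delta> / r" using cs by linarith
  hence "r * \<bar>cos (real n * \<phi> + \<gamma>)\<bar> < \<delta>" using r0 by (simp add: field_simps)
  moreover have "Re (cis (real n * \<phi>) * W) = r * cos (real n * \<phi> + \<gamma>)"
    unfolding W rcis_def by (simp add: cos_add algebra_simps)
  ultimately show ?thesis unfolding n_def using r0 by (intro exI[of _ "N0 + nat k"]) (simp add: abs_mult)
qed

lemma dist_nint_le: "dist_nint t \<le> \<bar>t - of_int k\<bar>"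
proof -
  have h: "\<bar>of_int (round t) - t\<bar> \<le> 1/2" by (rule of_int_round_abs_le)
  show ?thesis
  proof (cases "k = round t")
    case True thus ?thesis unfolding dist_nint_def by simp
  next
    case False
    hence "\<bar>k - round t\<bar> \<ge> 1" by linarith
    hence "\<bar>of_int k - of_int (round t)\<bar> \<ge> (1::real)" by (metis of_int_1_le_iff of_int_abs of_int_diff)
    thus ?thesis unfolding dist_nint_def using h by linarith
  qed
qed

lemma subseq_from_approx:
  fixes g :: "nat \<Rightarrow> real"
  assumes g0: "\<And>m. g m \<ge> 0" and H: "\<And>d B. d > 0 \<Longrightarrow> \<exists>m. m > B \<and> g m < d"
  shows "\<exists>\<psi> :: nat \<Rightarrow> nat. strict_mono \<psi> \<and> (\<forall>n. \<psi> n > 0) \<and> (\<lambda>n. g (\<psi> n)) \<longlonglongrightarrow> 0"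
proof -
  obtain F where F: "\<And>d B. d > 0 \<Longrightarrow> F d B > B \<and> g (F d B) < d"
    using H by metis
  define \<psi> where "\<psi> = rec_nat (F 1 0) (\<lambda>k p. F (1 / (real k + 2)) p)"
  have p0: "\<psi> 0 = F 1 0" and pS: "\<psi> (Suc k) = F (1 / (real k + 2)) (\<psi> k)" for k
    unfolding \<psi>_def by simp_all
  have bnd: "g (\<psi> k) < 1 / (real k + 1)" for k
  proof (cases k)
    case 0 thus ?thesis using F[of 1 0] p0 by simp
  next
    case (Suc j)
    have "g (\<psi> k) < 1 / (real j + 2)" unfolding Suc pS using F[of "1 / (real j + 2)" "\<psi> j"] by simp
    thus ?thesis unfolding Suc by (simp add: add.commute)
  qed
  have sm: "strict_mono \<psi>"
  proof (rule strict_monoI_Suc)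
    fix k show "\<psi> k < \<psi> (Suc k)" unfolding pS using F[of "1 / (real k + 2)" "\<psi> k"] by simp
  qed
  have pos: "\<psi> n > 0" for n
  proof (cases n)
    case 0 thus ?thesis using F[of 1 0] p0 by simp
  next
    case (Suc j) thus ?thesis using F[of "1 / (real j + 2)" "\<psi> j"] pS by simp
  qed
  have "(\<lambda>n. g (\<psi> n)) \<longlonglongrightarrow> 0"
  proof (rule tendsto_sandwich[of "\<lambda>_. 0" _ _ "\<lambda>n. 1 / (real n + 1)"])
    show "\<forall>\<^sub>F n in sequentially. 0 \<le> g (\<psi> n)" using g0 by simp
    show "\<forall>\<^sub>F n in sequentially. g (\<psi> n) \<le> 1 / (real n + 1)" using bnd by (simp add: less_imp_le)
    show "(\<lambda>n. 0::real) \<longlonglongrightarrow> 0" by simp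
    have "(\<lambda>n. inverse (real (Suc n))) \<longlonglongrightarrow> 0" by (rule LIMSEQ_inverse_real_of_nat)
    thus "(\<lambda>n. 1 / (real n + 1)) \<longlonglongrightarrow> 0" by (simp add: inverse_eq_divide add.commute)
  qed
  thus ?thesis using sm pos by blast
qed

context cubic begin

lemma not_real_pow:
  assumes e1: "evc \<eta> e > 1" and en: "evc \<eta> e * (cmod (evc \<sigma> e))^2 = 1" and k: "k \<ge> 1"
  shows "Im ((evc \<sigma> e)^k) \<noteq> 0"
proof
  assume im0: "Im ((evc \<sigma> e)^k) = 0"
  obtain a b c where vp: "vpow e k = (a,b,c)" by (cases "vpow e k")
  have Cp: "evc \<sigma> (a,b,c) = (evc \<sigma> e)^k" using evc_vpow[OF rootC, of e k] vp by simp
  have Rp: "evc \<eta> (a,b,c) = (evc \<eta> e)^k" using evc_vpow[OF rootR, of e k] vp by simp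
  have "Im (evc \<sigma> (a,b,c)) = Im \<sigma> * (of_int b + 2 * of_int c * Re \<sigma>)"
    by (simp add: evc_def power2_eq_square algebra_simps)
  hence "of_int b + 2 * of_int c * Re \<sigma> = 0" using im0 Cp nonreal by simp
  moreover have "\<eta> + 2 * Re \<sigma> = of_int e1"
  proof -
    have "Re (complex_of_real \<eta> + \<sigma> + cnj \<sigma>) = Re (of_int e1)" using v1 by simp
    thus ?thesis by simp
  qed
  ultimately have "of_int b + of_int c * (of_int e1 - \<eta>) = (0::real)"
  proof -
    assume a1: "of_int b + 2 * of_int c * Re \<sigma> = 0" and a2: "\<eta> + 2 * Re \<sigma> = of_int e1"
    have "of_int e1 - \<eta> = 2 * Re \<sigma>" using a2 by linarith
    thus ?thesis using a1 by (simp add: algebra_simps)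
  qed
  hence "evc \<eta> (b + c * e1, -c, 0) = 0" by (simp add: evc_def algebra_simps)
  hence "b + c * e1 = 0 \<and> -c = 0" using indR by blast
  hence bc: "b = 0" "c = 0" by auto
  have "(evc \<sigma> e)^k = of_int a" using Cp bc by (simp add: evc_def)
  moreover have "(evc \<eta> e)^k = of_int a" using Rp bc by (simp add: evc_def)
  ultimately have "cmod (evc \<sigma> e) ^ k = \<bar>(evc \<eta> e)^k\<bar>"
    by (metis norm_of_int norm_power)
  also have "... = (evc \<eta> e)^k" using e1 by simp
  finally have "cmod (evc \<sigma> e) ^ k = (evc \<eta> e)^k" .
  moreover have "cmod (evc \<sigma> e) < 1"
  proof -
    have "(cmod (evc \<sigma> e))^2 < 1"
    proof (rule ccontr)
      assume "\<not> (cmod (evc \<sigma> e))^2 < 1"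
      hence "evc \<eta> e * 1 \<le> evc \<eta> e * (cmod (evc \<sigma> e))^2" using e1 by (intro mult_left_mono) auto
      thus False using en e1 by simp
    qed
    thus ?thesis by (simp add: power_less_one_iff abs_square_less_1)
  qed
  hence "cmod (evc \<sigma> e) ^ k \<le> 1" by (simp add: power_le_one)
  moreover have "(evc \<eta> e)^k > 1" using e1 k by (simp add: one_less_power)
  ultimately show False by simp
qed

end



context cubic begin

lemma main_loc:
  assumes M: "M > 0" and hA: "of_int M * \<alpha> = evc \<eta> aA" and hB: "of_int M * \<beta> = evc \<eta> aB"
  shows "\<exists>\<psi>::nat\<Rightarrow>nat. strict_mono \<psi> \<and> (\<forall>n. \<psi> n > 0) \<and>
           (\<lambda>n. real (\<psi> n) * dist_nint (real (\<psi> n) * \<alpha>) * dist_nint (real (\<psi> n) * \<beta>)) \<longlonglongrightarrow> 0"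
proof -
  obtain e where eu: "evc \<eta> e > 1" and en: "evc \<eta> e * (cmod (evc \<sigma> e))^2 = 1"
    using unit_exists by blast
  define u where "u = evc \<eta> e"
  define w where "w = evc \<sigma> e"
  have u1: "u > 1" and uw: "u * (cmod w)^2 = 1" using eu en unfolding u_def w_def by simp_all
  have w0: "w \<noteq> 0" using uw by auto
  have cw: "cmod w < 1"
  proof -
    have "(cmod w)^2 < 1"
    proof (rule ccontr)
      assume "\<not> (cmod w)^2 < 1"
      hence "u * 1 \<le> u * (cmod w)^2" using u1 by (intro mult_left_mono) auto
      thus False using uw u1 by simp
    qed
    thus ?thesis by (simp add: abs_square_less_1)
  qed
  define \<phi> where "\<phi> = Arg w"
  have wpow: "w^n = complex_of_real (cmod w ^ n) * cis (real n * \<phi>)" for n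
  proof -
    have "w^n = (rcis (cmod w) \<phi>)^n" unfolding \<phi>_def by (simp add: rcis_cmod_Arg)
    also have "... = complex_of_real (cmod w ^ n) * cis (real n * \<phi>)" by (simp only: DeMoivre2) (simp add: rcis_def)
    finally show ?thesis .
  qed
  have irr: "\<phi> / (2*pi) \<notin> \<rat>"
  proof
    assume "\<phi> / (2*pi) \<in> \<rat>"
    then obtain p q where q0: "q > 0" and pq: "\<phi> / (2*pi) = of_int p / of_int q" by (rule Rats_cases')
    have "real (nat q) * \<phi> = (2*pi) * of_int p" using pq q0 by (simp add: field_simps)
    hence "Im (w ^ nat q) = 0" unfolding wpow by simp
    moreover have "Im (w ^ nat q) \<noteq> 0" using not_real_pow[OF eu en, of "nat q"] q0 unfolding w_def by simp
    ultimately show False by simp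
  qed
  define g where "g m = real m * dist_nint (real m * \<alpha>) * dist_nint (real m * \<beta>)" for m :: nat
  have g0: "g m \<ge> 0" for m unfolding g_def dist_nint_def by simp
  have approx: "\<exists>m. m > B \<and> g m < d" if d0: "d > 0" for d and B :: nat
  proof -
    define Wa where "Wa = complex_of_real (evc \<eta> aA) - evc \<sigma> aA"
    define Wb where "Wb = complex_of_real (evc \<eta> aB) - evc \<sigma> aB"
    define Kc where "Kc = 12 * real_of_int M * (cmod Wb + 1)"
    have Kc0: "Kc > 0" unfolding Kc_def using M by (simp add: add_nonneg_pos)
    obtain n0 where n0: "u^n0 > real B / real_of_int M + 2" using real_arch_pow[OF u1] by blast
    obtain n where nn0: "n \<ge> n0" and rho: "\<bar>Re (cis (real n * \<phi>) * Wa)\<bar> < d / Kc"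
      using dens_cis[OF irr, of "d / Kc" n0] d0 Kc0 by auto
    define \<rho> where "\<rho> = \<bar>Re (cis (real n * \<phi>) * Wa)\<bar>"
    define c where "c = cmod w ^ n"
    have c0: "c \<ge> 0" and c1: "c \<le> 1" unfolding c_def using cw by (simp_all add: power_le_one)
    have cu: "u^n * c^2 = 1"
    proof -
      have "u^n * c^2 = (u * (cmod w)^2)^n" unfolding c_def by (simp add: power_mult_distrib power_mult[symmetric] mult.commute)
      thus ?thesis using uw by simp
    qed
    have unn0: "u^n \<ge> u^n0" using u1 nn0 by (simp add: power_increasing)
    define vn where "vn = vpow e n"
    have Rv: "evc \<eta> vn = u^n" unfolding vn_def u_def by (rule evc_vpow[OF rootR])
    have Cv: "evc \<sigma> vn = w^n" unfolding vn_def w_def by (rule evc_vpow[OF rootC])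
    define q where "q = M * trv vn"
    define x where "x = trv (mulv vn aA)"
    define y where "y = trv (mulv vn aB)"
    have qv: "real_of_int q = real_of_int M * (u^n + 2 * Re (w^n))"
      unfolding q_def using traceR[of vn] Rv Cv by simp
    have xv: "real_of_int x = u^n * evc \<eta> aA + 2 * Re (w^n * evc \<sigma> aA)"
      unfolding x_def using traceR[of "mulv vn aA"] Rv Cv mulR mulC by simp
    have yv: "real_of_int y = u^n * evc \<eta> aB + 2 * Re (w^n * evc \<sigma> aB)"
      unfolding y_def using traceR[of "mulv vn aB"] Rv Cv mulR mulC by simp
    have dA: "real_of_int q * \<alpha> - real_of_int x = 2 * Re (w^n * Wa)"
    proof -
      have "real_of_int q * \<alpha> = (u^n + 2 * Re (w^n)) * evc \<eta> aA"
        unfolding qv hA[symmetric] by (simp add: algebra_simps)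
      thus ?thesis unfolding xv Wa_def by (simp add: algebra_simps)
    qed
    have dB: "real_of_int q * \<beta> - real_of_int y = 2 * Re (w^n * Wb)"
    proof -
      have "real_of_int q * \<beta> = (u^n + 2 * Re (w^n)) * evc \<eta> aB"
        unfolding qv hB[symmetric] by (simp add: algebra_simps)
      thus ?thesis unfolding yv Wb_def by (simp add: algebra_simps)
    qed
    have absA: "\<bar>real_of_int q * \<alpha> - real_of_int x\<bar> = 2 * c * \<rho>"
      unfolding dA wpow c_def \<rho>_def by (simp add: abs_mult mult.assoc)
    have absB: "\<bar>real_of_int q * \<beta> - real_of_int y\<bar> \<le> 2 * c * cmod Wb"
    proof -
      have "\<bar>Re (w^n * Wb)\<bar> \<le> cmod (w^n * Wb)" by (rule abs_Re_le_cmod)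
      also have "... = c * cmod Wb" unfolding c_def by (simp add: norm_mult norm_power)
      finally show ?thesis unfolding dB by simp
    qed
    have reW: "\<bar>Re (w^n)\<bar> \<le> c" unfolding c_def using abs_Re_le_cmod[of "w^n"] by (simp add: norm_power)
    have Mpos: "real_of_int M > 0" using M by simp
    have reW1: "Re (w^n) \<le> c" and reW2: "- c \<le> Re (w^n)" using reW by (simp_all add: abs_le_iff)
    have qup: "real_of_int q \<le> real_of_int M * (u^n + 2 * c)"
    proof -
      have "u^n + 2 * Re (w^n) \<le> u^n + 2 * c" using reW1 by linarith
      hence "real_of_int M * (u^n + 2 * Re (w^n)) \<le> real_of_int M * (u^n + 2 * c)"
        by (rule mult_left_mono) (use Mpos in linarith)
      thus ?thesis unfolding qv .
    qed
    have qlow: "real_of_int q > real B"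
    proof -
      have "u^n - 2 \<le> u^n + 2 * Re (w^n)" using reW2 c1 by linarith
      hence "real_of_int M * (u^n - 2) \<le> real_of_int M * (u^n + 2 * Re (w^n))"
        by (rule mult_left_mono) (use Mpos in linarith)
      hence A: "real_of_int M * (u^n - 2) \<le> real_of_int q" unfolding qv .
      have "real B / real_of_int M < u^n - 2" using n0 unn0 by linarith
      hence "real B < (u^n - 2) * real_of_int M" using Mpos by (simp only: pos_divide_less_eq)
      thus ?thesis using A by (simp add: mult.commute)
    qed
    define m where "m = nat q"
    have mq: "real m = real_of_int q" unfolding m_def using qlow by simp
    have mB: "m > B" using qlow mq by simp
    have "g m \<le> real_of_int q * \<bar>real_of_int q * \<alpha> - real_of_int x\<bar> * \<bar>real_of_int q * \<beta> - real_of_int y\<bar>"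
      unfolding g_def mq using qlow
      by (intro mult_mono dist_nint_le) (auto simp: dist_nint_def)
    also have "... \<le> (real_of_int M * (u^n + 2 * c)) * (2 * c * \<rho>) * (2 * c * cmod Wb)"
      unfolding absA using qup absB qlow c0 by (intro mult_mono) (auto simp: \<rho>_def)
    also have "... = 4 * real_of_int M * \<rho> * cmod Wb * (u^n * c^2 + 2 * c^3)"
      by (simp add: algebra_simps power2_eq_square power3_eq_cube)
    also have "... \<le> 4 * real_of_int M * \<rho> * (cmod Wb + 1) * 3"
    proof -
      have "c^3 \<le> 1" using c0 c1 by (simp add: power_le_one)
      hence "u^n * c^2 + 2 * c^3 \<le> 3" using cu by simp
      moreover have "u^n * c^2 + 2 * c^3 \<ge> 0" using cu c0 by simp
      ultimately show ?thesis using Mpos \<rho>_def by (intro mult_mono mult_left_mono) auto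
    qed
    also have "... < Kc * (d / Kc)"
    proof -
      have "\<rho> < d / Kc" using rho unfolding \<rho>_def .
      hence "(4 * real_of_int M * (cmod Wb + 1) * 3) * \<rho> < (4 * real_of_int M * (cmod Wb + 1) * 3) * (d / Kc)"
        using Mpos by (intro mult_strict_left_mono) (auto simp: add_nonneg_pos)
      thus ?thesis unfolding Kc_def by (simp add: algebra_simps)
    qed
    also have "... = d" using Kc0 by simp
    finally show ?thesis using mB by blast
  qed
  have "\<exists>\<psi>::nat\<Rightarrow>nat. strict_mono \<psi> \<and> (\<forall>n. \<psi> n > 0) \<and> (\<lambda>n. g (\<psi> n)) \<longlonglongrightarrow> 0"
    by (rule subseq_from_approx[OF g0 approx]) auto
  thus ?thesis unfolding g_def by simp
qed

end



lemma map_poly_of_rat_mult: "map_poly (of_rat :: rat \<Rightarrow> 'a::field_char_0) (p * q) = map_poly of_rat p * map_poly of_rat q"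
  by (intro poly_eqI) (simp_all add: coeff_map_poly coeff_mult of_rat_sum of_rat_mult)
lemma map_poly_of_rat_add: "map_poly (of_rat :: rat \<Rightarrow> 'a::field_char_0) (p + q) = map_poly of_rat p + map_poly of_rat q"
  by (intro poly_eqI) (simp_all add: coeff_map_poly of_rat_add)

lemma indep_root:
  fixes f p :: "rat poly" and z :: "'a::field_char_0"
  assumes irr: "irreducible f" and deg: "degree f = 3" and fz: "poly (map_poly of_rat f) z = 0"
    and dp: "degree p < 3" and pz: "poly (map_poly of_rat p) z = 0"
  shows "p = 0"
proof (rule ccontr)
  assume p0: "p \<noteq> 0"
  define g where "g = gcd f p"
  have "fst (bezout_coefficients f p) * f + snd (bezout_coefficients f p) * p = g"
    unfolding g_def by (rule bezout_coefficients_fst_snd)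
  hence "poly (map_poly of_rat g) z = 0"
    by (metis map_poly_of_rat_add map_poly_of_rat_mult poly_add poly_mult fz pz mult_zero_right add_0)
  hence nu: "\<not> is_unit g"
  proof (intro notI)
    assume "poly (map_poly of_rat g) z = 0" "is_unit g"
    then obtain c where "g = [:c:]" "is_unit c" by (auto simp: is_unit_poly_iff)
    hence "c \<noteq> 0" by auto
    with \<open>poly (map_poly of_rat g) z = 0\<close> \<open>g = [:c:]\<close> show False by (simp add: map_poly_pCons)
  qed
  have "g dvd f" unfolding g_def by simp
  then obtain h where fgh: "f = g * h" by (auto elim: dvdE)
  from irr fgh nu have "is_unit h" by (meson irreducibleD)
  hence "f dvd g" using fgh by (metis dvd_mult_unit_iff dvd_refl)
  also have "g dvd p" unfolding g_def by simp
  finally have "f dvd p" .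
  hence "degree f \<le> degree p" using p0 by (simp add: dvd_imp_degree_le)
  thus False using deg dp by simp
qed

lemma poly_le3:
  fixes p :: "rat poly" and z :: "'a::field_char_0"
  assumes "degree p \<le> 3"
  shows "poly (map_poly of_rat p) z = of_rat (coeff p 0) + of_rat (coeff p 1) * z + of_rat (coeff p 2) * z^2 + of_rat (coeff p 3) * z^3"
proof -
  have "poly (map_poly of_rat p) z = (\<Sum>i\<le>degree p. of_rat (coeff p i) * z^i)"
    by (simp add: poly_altdef degree_map_poly coeff_map_poly)
  also have "... = (\<Sum>i\<le>3. of_rat (coeff p i) * z^i)"
    by (rule sum.mono_neutral_left) (use assms in \<open>auto simp: coeff_eq_0\<close>)
  also have "... = of_rat (coeff p 0) + of_rat (coeff p 1) * z + of_rat (coeff p 2) * z^2 + of_rat (coeff p 3) * z^3"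
    by (simp add: numeral_3_eq_3 numeral_2_eq_2 atMost_Suc algebra_simps)
  finally show ?thesis .
qed

lemma indep3:
  fixes f :: "rat poly" and z :: "'a::field_char_0"
  assumes irr: "irreducible f" and deg: "degree f = 3" and fz: "poly (map_poly of_rat f) z = 0"
    and D: "D \<noteq> 0"
    and h: "of_int a + of_int b * (of_int D * z) + of_int c * (of_int D * z)^2 = 0"
  shows "a = 0 \<and> b = 0 \<and> c = 0"
proof -
  define p :: "rat poly" where "p = [:of_int a, of_int b * of_int D, of_int c * of_int D^2:]"
  have dp: "degree p < 3" unfolding p_def by simp
  have "poly (map_poly of_rat p) z = of_int a + of_int b * (of_int D * z) + of_int c * (of_int D * z)^2"
  proof -
    have cf: "coeff p 0 = of_int a" "coeff p 1 = of_int b * of_int D" "coeff p 2 = of_int c * of_int D^2" "coeff p 3 = 0"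
      unfolding p_def by (simp_all add: numeral_2_eq_2 numeral_3_eq_3)
    show ?thesis using poly_le3[of p z] dp unfolding cf by (simp add: algebra_simps power2_eq_square of_rat_mult)
  qed
  hence "poly (map_poly of_rat p) z = 0" using h by simp
  hence "p = 0" by (rule indep_root[OF irr deg fz dp])
  thus ?thesis using D unfolding p_def by simp
qed

lemma rat_common_denom:
  fixes s0 s1 s2 :: rat
  shows "\<exists>M::int. M > 0 \<and> (\<exists>a b c::int. of_int M * s0 = of_int a \<and> of_int M * s1 = of_int b \<and> of_int M * s2 = of_int c)"
proof -
  obtain a0 d0 where q0: "quotient_of s0 = (a0,d0)" by fastforce
  obtain a1 d1 where q1: "quotient_of s1 = (a1,d1)" by fastforce
  obtain a2 d2 where q2: "quotient_of s2 = (a2,d2)" by fastforce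
  have s: "s0 = of_int a0 / of_int d0" "s1 = of_int a1 / of_int d1" "s2 = of_int a2 / of_int d2"
    using q0 q1 q2 by (simp_all add: quotient_of_div)
  have d: "d0 > 0" "d1 > 0" "d2 > 0" using q0 q1 q2 by (simp_all add: quotient_of_denom_pos)
  show ?thesis
    by (rule exI[of _ "d0*d1*d2"], rule conjI, use d in simp,
        rule exI[of _ "a0*d1*d2"], rule exI[of _ "a1*d0*d2"], rule exI[of _ "a2*d0*d1"])
       (use d in \<open>simp add: s field_simps\<close>)
qed

lemma Q_adjoin_rep:
  fixes f :: "rat poly" and \<theta> \<alpha> :: real
  assumes deg: "degree f = 3" and f\<theta>: "poly (map_poly of_rat f) \<theta> = 0" and \<alpha>: "\<alpha> \<in> Q_adjoin \<theta>"
  shows "\<exists>r0 r1 r2. \<alpha> = of_rat r0 + of_rat r1 * \<theta> + of_rat r2 * \<theta>^2"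
proof -
  obtain p where p: "\<alpha> = poly (map_poly of_rat p) \<theta>" using \<alpha> unfolding Q_adjoin_def by blast
  define r where "r = p mod f"
  have f0: "f \<noteq> 0" using deg by auto
  have "p = f * (p div f) + r" unfolding r_def by simp
  hence "poly (map_poly of_rat p) \<theta> = poly (map_poly of_rat f) \<theta> * poly (map_poly of_rat (p div f)) \<theta> + poly (map_poly of_rat r) \<theta>"
    by (metis map_poly_of_rat_add map_poly_of_rat_mult poly_add poly_mult)
  hence a: "\<alpha> = poly (map_poly of_rat r) \<theta>" using p f\<theta> by simp
  have dr: "degree r < 3 \<or> r = 0" unfolding r_def using degree_mod_less[OF f0, of p] deg by auto
  hence dr': "degree r \<le> 3" by auto
  have c3: "coeff r 3 = 0" using dr by (auto simp: coeff_eq_0)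
  show ?thesis using poly_le3[OF dr', of \<theta>] a c3 by auto
qed


lemma scale_id:
  fixes z :: "'a::field_char_0" and c0 c1 c2 c3 :: rat
  assumes c3: "c3 \<noteq> 0" and h2: "of_int D * (c2/c3) = of_int a2" and h1: "of_int D * (c1/c3) = of_int a1"
    and h0: "of_int D * (c0/c3) = of_int a0"
  shows "(of_int D * z)^3 - of_int (-a2) * (of_int D * z)^2 + of_int (D*a1) * (of_int D * z) - of_int (-(D^2*a0))
     = of_int D^3 / of_rat c3 * (of_rat c0 + of_rat c1 * z + of_rat c2 * z^2 + of_rat c3 * z^3)"
proof -
  have H2: "(of_int a2::'a) = of_int D * of_rat c2 / of_rat c3"
    using arg_cong[OF h2, of "of_rat :: rat \<Rightarrow> 'a"] by (simp add: of_rat_mult of_rat_divide)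
  have H1: "(of_int a1::'a) = of_int D * of_rat c1 / of_rat c3"
    using arg_cong[OF h1, of "of_rat :: rat \<Rightarrow> 'a"] by (simp add: of_rat_mult of_rat_divide)
  have H0: "(of_int a0::'a) = of_int D * of_rat c0 / of_rat c3"
    using arg_cong[OF h0, of "of_rat :: rat \<Rightarrow> 'a"] by (simp add: of_rat_mult of_rat_divide)
  have c3': "(of_rat c3 :: 'a) \<noteq> 0" using c3 by simp
  show ?thesis using c3' by (simp add: H2 H1 H0 field_simps power2_eq_square power3_eq_cube)
qed

theorem mainTheorem4:
  fixes f :: "rat poly" and \<theta> \<alpha> \<beta> :: real
  assumes "cubic_one_real_embedding_gen f \<theta>"
    and "\<alpha> \<in> Q_adjoin \<theta>" and "\<beta> \<in> Q_adjoin \<theta>"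
  shows "\<exists>\<psi> :: nat \<Rightarrow> nat. strict_mono \<psi> \<and> (\<forall>n. \<psi> n > 0) \<and>
           (\<lambda>n. real (\<psi> n) * dist_nint (real (\<psi> n) * \<alpha>) * dist_nint (real (\<psi> n) * \<beta>))
             \<longlonglongrightarrow> 0"
proof -
  have irr: "irreducible f" and deg: "degree f = 3" and f\<theta>: "poly (map_poly of_rat f) \<theta> = 0"
    and card1: "card {x::real. poly (map_poly of_rat f) x = 0} = 1"
    using assms(1) unfolding cubic_one_real_embedding_gen_def by auto
  define c where "c i = coeff f i" for i
  have f0: "f \<noteq> 0" using deg by auto
  have c3: "c 3 \<noteq> 0" unfolding c_def using f0 deg by (metis leading_coeff_0_iff)
  have FR: "poly (map_poly of_rat f) z = of_rat (c 0) + of_rat (c 1)*z + of_rat (c 2)*z^2 + of_rat (c 3)*z^3" for z :: real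
    using poly_le3[of f z] deg unfolding c_def by simp
  have FC: "poly (map_poly of_rat f) z = of_rat (c 0) + of_rat (c 1)*z + of_rat (c 2)*z^2 + of_rat (c 3)*z^3" for z :: complex
    using poly_le3[of f z] deg unfolding c_def by simp
  obtain D where D0: "D > 0" and "\<exists>a2 a1 a0::int. of_int D * (c 2 / c 3) = of_int a2 \<and> of_int D * (c 1 / c 3) = of_int a1 \<and> of_int D * (c 0 / c 3) = of_int a0"
    using rat_common_denom[of "c 2 / c 3" "c 1 / c 3" "c 0 / c 3"] by blast
  then obtain a2 a1 a0 where hm: "of_int D * (c 2 / c 3) = of_int a2" "of_int D * (c 1 / c 3) = of_int a1" "of_int D * (c 0 / c 3) = of_int a0"
    by blast
  define e1 where "e1 = -a2"
  define e2 where "e2 = D * a1"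
  define e3 where "e3 = -(D^2 * a0)"
  have scR: "(of_int D * z)^3 - of_int e1 * (of_int D * z)^2 + of_int e2 * (of_int D * z) - of_int e3
      = of_int D^3 / of_rat (c 3) * poly (map_poly of_rat f) z" for z :: real
    unfolding FR e1_def e2_def e3_def by (rule scale_id[OF c3 hm])
  have scC: "(of_int D * z)^3 - of_int e1 * (of_int D * z)^2 + of_int e2 * (of_int D * z) - of_int e3
      = of_int D^3 / of_rat (c 3) * poly (map_poly of_rat f) z" for z :: complex
    unfolding FC e1_def e2_def e3_def by (rule scale_id[OF c3 hm])
  define \<eta> where "\<eta> = of_int D * \<theta>"
  have Dne: "(of_int D :: real) \<noteq> 0" using D0 by simp
  have P\<eta>: "\<eta>^3 - of_int e1 * \<eta>^2 + of_int e2 * \<eta> - of_int e3 = 0"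
    unfolding \<eta>_def scR f\<theta> by simp
  have set1: "{x::real. poly (map_poly of_rat f) x = 0} = {\<theta>}"
  proof -
    obtain t where t: "{x::real. poly (map_poly of_rat f) x = 0} = {t}" using card1 by (rule card_1_singletonE)
    moreover have "\<theta> \<in> {x::real. poly (map_poly of_rat f) x = 0}" using f\<theta> by simp
    ultimately show ?thesis by simp
  qed
  have realroot: "r = \<eta>" if "r^3 - of_int e1 * r^2 + of_int e2 * r - of_int e3 = 0" for r :: real
  proof -
    have "r = of_int D * (r / of_int D)" using Dne by simp
    hence "of_int D^3 / of_rat (c 3) * poly (map_poly of_rat f) (r / of_int D) = 0"
      using that scR[of "r / of_int D"] by simp
    hence "poly (map_poly of_rat f) (r / of_int D) = 0" using Dne c3 by simp
    hence "r / of_int D = \<theta>" using set1 by blast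
    thus ?thesis unfolding \<eta>_def using Dne by (simp add: field_simps)
  qed
  have indR: "a = 0 \<and> b = 0 \<and> cc = 0" if "evc \<eta> (a,b,cc) = 0" for a b cc
    by (rule indep3[OF irr deg f\<theta>, of D]) (use D0 that in \<open>simp_all add: evc_def \<eta>_def\<close>)
  define u where "u = \<eta> - of_int e1"
  define v where "v = of_int e2 + \<eta> * (\<eta> - of_int e1)"
  have fact3: "r^3 - of_int e1 * r^2 + of_int e2 * r - of_int e3 = (r - \<eta>) * (r^2 + u * r + v)" for r :: real
  proof -
    have "of_int e3 = \<eta>^3 - of_int e1 * \<eta>^2 + of_int e2 * \<eta>" using P\<eta> by simp
    thus ?thesis unfolding u_def v_def by (simp add: algebra_simps power2_eq_square power3_eq_cube)
  qed
  have disc: "u^2 - 4 * v < 0"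
  proof (rule ccontr)
    assume "\<not> u^2 - 4 * v < 0"
    hence dn: "u^2 - 4 * v \<ge> 0" by simp
    define r where "r = (-u + sqrt (u^2 - 4 * v))/2"
    have "r^2 + u * r + v = 0"
    proof -
      have s2: "sqrt (u^2 - 4 * v)^2 = u^2 - 4 * v" using dn by simp
      have key: "((-u+t)/2)^2 + u * ((-u+t)/2) + v = (t^2 - (u^2 - 4 * v))/4" for t :: real
        by (simp add: field_simps power2_eq_square)
      show ?thesis unfolding r_def key s2 by simp
    qed
    hence "r^3 - of_int e1 * r^2 + of_int e2 * r - of_int e3 = 0" unfolding fact3 by simp
    hence "r = \<eta>" by (rule realroot)
    hence "\<eta>^2 + u * \<eta> + v = 0" using \<open>r^2 + u * r + v = 0\<close> by simp
    hence "evc \<eta> (e2, -2*e1, 3) = 0" unfolding u_def v_def evc_def by (simp add: algebra_simps power2_eq_square)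
    from indR[OF this] show False by simp
  qed
  define \<sigma> where "\<sigma> = Complex (-u/2) (sqrt (4 * v - u^2)/2)"
  have sq: "sqrt (4 * v - u^2)^2 = 4 * v - u^2" using disc by simp
  have Im\<sigma>: "Im \<sigma> \<noteq> 0" unfolding \<sigma>_def using disc by simp
  have sumC: "\<sigma> + cnj \<sigma> = complex_of_real (-u)" unfolding \<sigma>_def by (simp add: complex_eq_iff)
  have prodC: "\<sigma> * cnj \<sigma> = complex_of_real v"
  proof -
    have "\<sigma> * cnj \<sigma> = complex_of_real ((u/2)^2 + (sqrt (4 * v - u^2)/2)^2)"
      unfolding \<sigma>_def by (simp add: complex_eq_iff power2_eq_square)
    also have "(u/2)^2 + (sqrt (4 * v - u^2)/2)^2 = v" using sq by (simp add: power_divide algebra_simps)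
    finally show ?thesis .
  qed
  have v1: "complex_of_real \<eta> + \<sigma> + cnj \<sigma> = of_int e1"
  proof -
    have "complex_of_real \<eta> + \<sigma> + cnj \<sigma> = complex_of_real (\<eta> - u)" using sumC by (simp add: add.assoc)
    thus ?thesis unfolding u_def by simp
  qed
  have v2: "complex_of_real \<eta> * \<sigma> + complex_of_real \<eta> * cnj \<sigma> + \<sigma> * cnj \<sigma> = of_int e2"
  proof -
    have "complex_of_real \<eta> * \<sigma> + complex_of_real \<eta> * cnj \<sigma> + \<sigma> * cnj \<sigma>
        = complex_of_real \<eta> * (\<sigma> + cnj \<sigma>) + \<sigma> * cnj \<sigma>" by (simp add: algebra_simps)
    also have "... = complex_of_real (\<eta> * (-u) + v)" unfolding sumC prodC by simp
    also have "\<eta> * (-u) + v = of_int e2" unfolding u_def v_def by (simp add: algebra_simps)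
    finally show ?thesis by simp
  qed
  have v3: "complex_of_real \<eta> * \<sigma> * cnj \<sigma> = of_int e3"
  proof -
    have "complex_of_real \<eta> * \<sigma> * cnj \<sigma> = complex_of_real (\<eta> * v)" using prodC by (simp add: mult.assoc)
    also have "\<eta> * v = of_int e3" unfolding v_def using P\<eta> by (simp add: algebra_simps power2_eq_square power3_eq_cube)
    finally show ?thesis by simp
  qed
  have rootC: "\<sigma>^3 = of_int e1 * \<sigma>^2 - of_int e2 * \<sigma> + of_int e3"
  proof (rule cub.vieta_root[of \<sigma> "complex_of_real \<eta>" "cnj \<sigma>"])
    show "\<sigma> + complex_of_real \<eta> + cnj \<sigma> = complex_of_int e1" using v1 by (simp add: algebra_simps)
    show "\<sigma> * complex_of_real \<eta> + \<sigma> * cnj \<sigma> + complex_of_real \<eta> * cnj \<sigma> = complex_of_int e2"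
      using v2 by (simp add: algebra_simps)
    show "\<sigma> * complex_of_real \<eta> * cnj \<sigma> = complex_of_int e3" using v3 by (simp add: algebra_simps)
  qed
  define \<zeta> where "\<zeta> = \<sigma> / of_int D"
  have DneC: "(of_int D :: complex) \<noteq> 0" using D0 by simp
  have \<sigma>\<zeta>: "\<sigma> = of_int D * \<zeta>" unfolding \<zeta>_def using DneC by simp
  have f\<zeta>: "poly (map_poly of_rat f) \<zeta> = 0"
  proof -
    have "of_int D^3 / of_rat (c 3) * poly (map_poly of_rat f) \<zeta> = (0::complex)"
      using scC[of \<zeta>] rootC unfolding \<sigma>\<zeta>[symmetric] by simp
    thus ?thesis using DneC c3 by simp
  qed
  have indC: "a = 0 \<and> b = 0 \<and> cc = 0" if "evc \<sigma> (a,b,cc) = 0" for a b cc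
    by (rule indep3[OF irr deg f\<zeta>, of D]) (use D0 that in \<open>simp_all add: evc_def \<sigma>\<zeta>\<close>)
  interpret cubic e1 e2 e3 \<eta> \<sigma>
    by (unfold_locales) (use v1 v2 v3 Im\<sigma> indR indC in auto)
  have rep: "\<exists>M aA. M > 0 \<and> of_int M * x = evc \<eta> aA" if xin: "x \<in> Q_adjoin \<theta>" for x
  proof -
    obtain r0 r1 r2 where x: "x = of_rat r0 + of_rat r1 * \<theta> + of_rat r2 * \<theta>^2"
      using Q_adjoin_rep[OF deg f\<theta> xin] by blast
    obtain M where M0: "M > 0" and "\<exists>a b cc::int. of_int M * r0 = of_int a \<and> of_int M * (r1 / of_int D) = of_int b \<and> of_int M * (r2 / of_int D^2) = of_int cc"
      using rat_common_denom[of r0 "r1 / of_int D" "r2 / of_int D^2"] by blast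
    then obtain a b cc where abc: "of_int M * r0 = of_int a" "of_int M * (r1 / of_int D) = of_int b" "of_int M * (r2 / of_int D^2) = of_int cc"
      by blast
    have A: "(of_int a :: real) = of_int M * of_rat r0"
      using arg_cong[OF abc(1), of "of_rat :: rat \<Rightarrow> real"] by (simp add: of_rat_mult)
    have B: "(of_int b :: real) = of_int M * of_rat r1 / of_int D"
      using arg_cong[OF abc(2), of "of_rat :: rat \<Rightarrow> real"] by (simp add: of_rat_mult of_rat_divide)
    have C: "(of_int cc :: real) = of_int M * of_rat r2 / of_int D^2"
      using arg_cong[OF abc(3), of "of_rat :: rat \<Rightarrow> real"] by (simp add: of_rat_mult of_rat_divide of_rat_power)
    have "of_int M * x = evc \<eta> (a,b,cc)"
      unfolding x evc_def \<eta>_def using Dne by (simp add: A B C field_simps power2_eq_square)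
    thus ?thesis using M0 by blast
  qed
  obtain MA aA where MA: "MA > 0" "of_int MA * \<alpha> = evc \<eta> aA" using rep[OF assms(2)] by blast
  obtain MB aB where MB: "MB > 0" "of_int MB * \<beta> = evc \<eta> aB" using rep[OF assms(3)] by blast
  obtain x1 x2 x3 where xA: "aA = (x1,x2,x3)" by (cases aA)
  obtain y1 y2 y3 where yB: "aB = (y1,y2,y3)" by (cases aB)
  have "of_int (MA*MB) * \<alpha> = evc \<eta> (MB*x1, MB*x2, MB*x3)"
  proof -
    have "of_int (MA*MB) * \<alpha> = of_int MB * (of_int MA * \<alpha>)" by simp
    also have "... = evc \<eta> (MB*x1, MB*x2, MB*x3)" unfolding MA(2) xA by (simp add: evc_def algebra_simps)
    finally show ?thesis .
  qed
  moreover have "of_int (MA*MB) * \<beta> = evc \<eta> (MA*y1, MA*y2, MA*y3)"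
  proof -
    have "of_int (MA*MB) * \<beta> = of_int MA * (of_int MB * \<beta>)" by simp
    also have "... = evc \<eta> (MA*y1, MA*y2, MA*y3)" unfolding MB(2) yB by (simp add: evc_def algebra_simps)
    finally show ?thesis .
  qed
  moreover have "MA * MB > 0" using MA(1) MB(1) by simp
  ultimately show ?thesis by (rule main_loc[rotated])
qed



end
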